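(* For every $\lambda\in P^+$ (notation as in the context) one has $$(\widetilde\lambda+2\widetilde\rho,\widetilde\lambda)=(\lambda+2\rho,\lambda)=(\overline\lambda+2\overline\rho,\overline\lambda).$$
   Context: Fix $m\in\mathbb Z_{\ge0}$ and a type $\mathfrak x\in\{\mathfrak a,\mathfrak b,\mathfrak b^\bullet,\mathfrak c,\mathfrak d\}$. Consider symbols $\Lambda_0$ and $\epsilon_j$ for $j\in\{-m,\dots,-1\}\cup\frac12\mathbb N$, and the symmetric bilinear form on their $\mathbb C$-span given by $(\Lambda_0,\Lambda_0)=0$, $(\epsilon_i,\epsilon_j)=(-1)^{2j}\delta_{ij}$, $(\Lambda_0,\epsilon_j)=-\delta_j$, where $\delta_j=1$ for $j>0$ and $\delta_j=0$ for $j<0$. Dominant weights: given a partition $\nu=(\nu_1,\nu_2,\dots)$, $d\in\mathbb C$ and $\lambda_{-m},\dots,\lambda_{-1}\in\mathbb C$ (in $\mathbb Z$ for type $\mathfrak b^\bullet$), put $\lambda=\sum_{i=-m}^{-1}\lambda_i\epsilon_i+\sum_{j\in\mathbb N}\nu_j\epsilon_j+d\Lambda_0$, $\overline\lambda=\sum_{i=-m}^{-1}\lambda_i\epsilon_i+\sum_{s\in\frac12+\mathbb Z_{\ge0}}\nu'_{s+1/2}\epsilon_s+d\Lambda_0$, $\widetilde\lambda=\sum_{i=-m}^{-1}\lambda_i\epsilon_i+\sum_{r\in\frac12\mathbb N}\theta(\nu)_r\epsilon_r+d\Lambda_0$, where $\nu'$ is the conjugate partition and $\theta(\nu)_{i-1/2}=\max\{\nu'_i-i+1,0\}$,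 $\theta(\nu)_i=\max\{\nu_i-i,0\}$ for $i\in\mathbb N$. $P^+$ is the set of all such $\lambda$. Let $\mathbf r=-1$ in type $\mathfrak a$, $-m-\frac12$ in types $\mathfrak b,\mathfrak b^\bullet$, $-m-1$ in type $\mathfrak c$, $-m$ in type $\mathfrak d$. For a weight $\mu=c\Lambda_0+\sum_j\mu_j\epsilon_j$ (finitely many nonzero $\mu_j$) define $(\mu+2\rho,\mu):=(\mu,\mu)+2\sum_j\mu_j\rho_j$, $(\mu+2\overline\rho,\mu):=(\mu,\mu)+2\sum_j\mu_j\overline\rho_j$, $(\mu+2\widetilde\rho,\mu):=(\mu,\mu)+2\sum_j\mu_j\widetilde\rho_j$, where for $j<0$: $\rho_j=\overline\rho_j=\widetilde\rho_j=\mathbf r-j$; for $j\in\mathbb N$: $\rho_j=\mathbf r+1-j$; for $j\in\frac12+\mathbb Z_{\ge0}$: $\overline\rho_j=\mathbf r+j+\frac12$; for $j\in\frac12\mathbb N$: $\widetilde\rho_j=\mathbf r+1$. *)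

theory Defs
  imports Complex_Main
begin

datatype lie_type = TA | TB | TBbullet | TC | TD

definition rr :: "lie_type \<Rightarrow> nat \<Rightarrow> complex" where
  "rr x m = (case x of TA \<Rightarrow> -1
                     | TB \<Rightarrow> - of_nat m - 1/2
                     | TBbullet \<Rightarrow> - of_nat m - 1/2
                     | TC \<Rightarrow> - of_nat m - 1
                     | TD \<Rightarrow> - of_nat m)"

text \<open>Indices j are rationals: j in {-m,...,-1} or j in (1/2)N.
  A weight c Lambda_0 + sum_j mu_j eps_j is a pair (c, mu) with mu finitely supported.\<close>
type_synonym weight = "complex \<times> (rat \<Rightarrow> complex)"

definition supp :: "(rat \<Rightarrow> complex) \<Rightarrow> rat set" where
  "supp f = {j. f j \<noteq> 0}"

definition delta :: "rat \<Rightarrow> complex" where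
  "delta j = (if j > 0 then 1 else 0)"

definition form :: "weight \<Rightarrow> weight \<Rightarrow> complex" where
  "form mu nu = (case mu of (c, f) \<Rightarrow> case nu of (d, g) \<Rightarrow>
      c * d * 0
    + (\<Sum>j\<in>supp f \<union> supp g. (-1::complex) powi \<lfloor>2 * j\<rfloor> * f j * g j)
    + c * (\<Sum>j\<in>supp g. - delta j * g j)
    + d * (\<Sum>j\<in>supp f. - delta j * f j))"

definition form_rho :: "weight \<Rightarrow> (rat \<Rightarrow> complex) \<Rightarrow> complex" where
  "form_rho mu rho = form mu mu + 2 * (\<Sum>j\<in>supp (snd mu). snd mu j * rho j)"

definition rho :: "complex \<Rightarrow> rat \<Rightarrow> complex" where
  "rho r j = (if j < 0 then r - of_rat j
              else if j \<in> \<int> \<and> j > 0 then r + 1 - of_rat j else 0)"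

definition rho_bar :: "complex \<Rightarrow> rat \<Rightarrow> complex" where
  "rho_bar r j = (if j < 0 then r - of_rat j
              else if j - 1/2 \<in> \<int> \<and> j > 0 then r + of_rat j + 1/2 else 0)"

definition rho_tilde :: "complex \<Rightarrow> rat \<Rightarrow> complex" where
  "rho_tilde r j = (if j < 0 then r - of_rat j
              else if 2 * j \<in> \<int> \<and> j > 0 then r + 1 else 0)"

text \<open>Partitions: nu :: nat => nat, entries nu 1, nu 2, ... (nu 0 is ignored),
  weakly decreasing and finitely supported.\<close>
definition is_partition :: "(nat \<Rightarrow> nat) \<Rightarrow> bool" where
  "is_partition nu \<longleftrightarrow> (\<forall>i\<ge>1. nu (Suc i) \<le> nu i) \<and> finite {i. i \<ge> 1 \<and> nu i \<noteq> 0}"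

definition conj_part :: "(nat \<Rightarrow> nat) \<Rightarrow> nat \<Rightarrow> nat" where
  "conj_part nu i = card {j. j \<ge> 1 \<and> i \<le> nu j}"

definition neg_coef :: "nat \<Rightarrow> (int \<Rightarrow> complex) \<Rightarrow> rat \<Rightarrow> complex" where
  "neg_coef m l j = (if j \<in> \<int> \<and> - of_nat m \<le> j \<and> j \<le> -1 then l \<lfloor>j\<rfloor> else 0)"

definition lam :: "nat \<Rightarrow> (int \<Rightarrow> complex) \<Rightarrow> (nat \<Rightarrow> nat) \<Rightarrow> complex \<Rightarrow> weight" where
  "lam m l nu d = (d, \<lambda>j. if j < 0 then neg_coef m l j
      else if j \<in> \<int> \<and> j \<ge> 1 then of_nat (nu (nat \<lfloor>j\<rfloor>)) else 0)"

definition lam_bar :: "nat \<Rightarrow> (int \<Rightarrow> complex) \<Rightarrow> (nat \<Rightarrow> nat) \<Rightarrow> complex \<Rightarrow> weight" where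
  "lam_bar m l nu d = (d, \<lambda>j. if j < 0 then neg_coef m l j
      else if j - 1/2 \<in> \<int> \<and> j > 0 then of_nat (conj_part nu (nat \<lfloor>j + 1/2\<rfloor>)) else 0)"

text \<open>theta(nu)_{i-1/2} = max(nu'_i - i + 1, 0), theta(nu)_i = max(nu_i - i, 0).\<close>
definition lam_tilde :: "nat \<Rightarrow> (int \<Rightarrow> complex) \<Rightarrow> (nat \<Rightarrow> nat) \<Rightarrow> complex \<Rightarrow> weight" where
  "lam_tilde m l nu d = (d, \<lambda>j. if j < 0 then neg_coef m l j
      else if j \<in> \<int> \<and> j \<ge> 1 then
        of_int (max (int (nu (nat \<lfloor>j\<rfloor>)) - \<lfloor>j\<rfloor>) 0)
      else if j - 1/2 \<in> \<int> \<and> j > 0 then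
        of_int (max (int (conj_part nu (nat \<lfloor>j + 1/2\<rfloor>)) - \<lfloor>j + 1/2\<rfloor> + 1) 0)
      else 0)"

end

theory Submission
  imports Defs
begin

definition TT :: "complex \<Rightarrow> (rat \<Rightarrow> complex) \<Rightarrow> (rat \<Rightarrow> complex) \<Rightarrow> rat \<Rightarrow> complex" where
  "TT c f \<rho> j = (-1::complex) powi \<lfloor>2*j\<rfloor> * f j * f j - 2*c*delta j * f j + 2 * f j * \<rho> j"

lemma form_rho_split:
  assumes "finite S" "supp f \<subseteq> S"
  shows "form_rho (c,f) \<rho> = (\<Sum>j\<in>S. TT c f \<rho> j)"
proof -
  have fin: "finite (supp f)" using assms finite_subset by blast
  have "(\<Sum>j\<in>S. TT c f \<rho> j) = (\<Sum>j\<in>supp f. TT c f \<rho> j)"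
    by (rule sum.mono_neutral_right[OF assms(1) assms(2)]) (auto simp: TT_def supp_def)
  also have "\<dots> = form_rho (c,f) \<rho>"
    unfolding TT_def form_rho_def form_def
    by (simp add: sum.distrib sum_subtractf sum_distrib_left sum_negf algebra_simps)
  finally show ?thesis by simp
qed

lemma R1:
  "(\<Sum>j\<in>{1..n}. 2 * of_nat j - 1 + (K::complex)) = of_nat n * of_nat n + of_nat n * K"
  by (induction n) (simp_all add: algebra_simps)

lemma R1':
  "(\<Sum>j\<in>{1..n}. - (2 * of_nat j - 1) + (K::complex)) = - (of_nat n * of_nat n) + of_nat n * K"
  by (induction n) (simp_all add: algebra_simps)

lemma R2:
  "(\<Sum>j\<in>{1..n}. if c < j then 2 * (of_nat j - of_nat c) - 1 + (K::complex) else 0)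
     = of_nat (n-c) * of_nat (n-c) + of_nat (n-c) * K"
proof (induction n)
  case 0 then show ?case by simp
next
  case (Suc n)
  show ?case
  proof (cases "c < Suc n")
    case True
    then have e: "Suc n - c = Suc (n - c)" by simp
    have e2: "(of_nat (Suc n) - of_nat c::complex) = of_nat (n - c) + 1" using True
      by (simp add: of_nat_diff)
    show ?thesis using True Suc by (simp add: e e2 algebra_simps)
  next
    case False then show ?thesis using Suc by simp
  qed
qed

lemma R3:
  assumes "1 \<le> c"
  shows "(\<Sum>i\<in>{1..n}. if c \<le> i then - (2 * (of_nat i - of_nat c) + 1) + (K::complex) else 0)
     = - (of_nat (n+1-c) * of_nat (n+1-c)) + of_nat (n+1-c) * K"
proof (induction n)
  case 0 then show ?case using assms by simp
next
  case (Suc n)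
  show ?case
  proof (cases "c \<le> Suc n")
    case True
    then have e: "Suc n + 1 - c = Suc (n + 1 - c)" by simp
    have e2: "(of_nat (Suc n) - of_nat c::complex) = of_nat (n + 1 - c)" using True
      by (simp add: of_nat_diff)
    show ?thesis using True Suc by (simp add: e e2 algebra_simps)
  next
    case False then show ?thesis using Suc by simp
  qed
qed

lemma part_anti:
  assumes "is_partition nu" "1 \<le> i"
  shows "nu (i + t) \<le> nu i"
proof (induction t)
  case 0 then show ?case by simp
next
  case (Suc t)
  have "nu (Suc (i + t)) \<le> nu (i + t)" using assms unfolding is_partition_def by auto
  then show ?case using Suc by simp
qed

lemma part_anti': "is_partition nu \<Longrightarrow> 1 \<le> i \<Longrightarrow> i \<le> i' \<Longrightarrow> nu i' \<le> nu i"
  using part_anti[of nu i "i' - i"] by simp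

lemma down_closed_interval:
  assumes "finite A" "A \<subseteq> {1..}" "\<And>i i'. i \<in> A \<Longrightarrow> 1 \<le> i' \<Longrightarrow> i' \<le> i \<Longrightarrow> i' \<in> A"
  shows "A = {1..card A}"
proof (cases "A = {}")
  case True then show ?thesis by simp
next
  case False
  define M where "M = Max A"
  have "M \<in> A" using False assms(1) M_def by simp
  have "A = {1..M}"
  proof
    show "A \<subseteq> {1..M}" using assms(1,2) M_def by auto
    show "{1..M} \<subseteq> A" using assms(3) \<open>M \<in> A\<close> by auto
  qed
  then show ?thesis by simp
qed

lemma conj_interval:
  assumes "is_partition nu" "\<And>i. i > N \<Longrightarrow> nu i = 0" "1 \<le> k"
  shows "{i\<in>{1..N}. k \<le> nu i} = {1..conj_part nu k}"
proof -
  have eq: "{j. j \<ge> 1 \<and> k \<le> nu j} = {i\<in>{1..N}. k \<le> nu i}"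
    using assms(2,3) by (auto, metis le_zero_eq not_le not_one_le_zero)
  have "{i\<in>{1..N}. k \<le> nu i} = {1..card {i\<in>{1..N}. k \<le> nu i}}"
    apply (rule down_closed_interval)
      apply simp
     apply auto[1]
    using part_anti'[OF assms(1)] by (auto, fastforce)
  then show ?thesis unfolding conj_part_def eq by simp
qed

lemma swap_boxes:
  fixes h :: "nat \<Rightarrow> nat \<Rightarrow> complex"
  assumes "is_partition nu" "\<And>i. i > N \<Longrightarrow> nu i = 0" "\<And>i. 1 \<le> i \<Longrightarrow> nu i \<le> N"
  shows "(\<Sum>k\<in>{1..N}. \<Sum>i\<in>{1..conj_part nu k}. h i k) = (\<Sum>i\<in>{1..N}. \<Sum>j\<in>{1..nu i}. h i j)"
proof -
  have "(\<Sum>i\<in>{1..N}. \<Sum>j\<in>{1..nu i}. h i j) = (\<Sum>i\<in>{1..N}. \<Sum>j\<in>{1..N}. if j \<le> nu i then h i j else 0)"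
  proof (rule sum.cong[OF refl])
    fix i assume "i \<in> {1..N}"
    have "{1..N} \<inter> {j. j \<le> nu i} = {1..nu i}" using assms(3)[of i] \<open>i \<in> {1..N}\<close> by auto
    then show "(\<Sum>j\<in>{1..nu i}. h i j) = (\<Sum>j\<in>{1..N}. if j \<le> nu i then h i j else 0)"
      using sum.inter_restrict[of "{1..N}" "h i" "{j. j \<le> nu i}"] by simp
  qed
  also have "\<dots> = (\<Sum>j\<in>{1..N}. \<Sum>i\<in>{1..N}. if j \<le> nu i then h i j else 0)"
    by (rule sum.swap)
  also have "\<dots> = (\<Sum>k\<in>{1..N}. \<Sum>i\<in>{1..conj_part nu k}. h i k)"
  proof (rule sum.cong[OF refl])
    fix k assume "k \<in> {1..N}"
    have ci: "{i\<in>{1..N}. k \<le> nu i} = {1..conj_part nu k}"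
      using conj_interval assms(1,2) \<open>k \<in> {1..N}\<close> by auto
    have "{1..N} \<inter> {i. k \<le> nu i} = {1..conj_part nu k}"
      using ci by blast
    then show "(\<Sum>i\<in>{1..N}. if k \<le> nu i then h i k else 0) = (\<Sum>i\<in>{1..conj_part nu k}. h i k)"
      using sum.inter_restrict[of "{1..N}" "\<lambda>i. h i k" "{i. k \<le> nu i}"] by simp
  qed
  finally show ?thesis by simp
qed

lemma int_facts:
  fixes i :: nat assumes "1 \<le> i"
  shows "(of_nat i::rat) \<in> \<int>" "\<not> (of_nat i::rat) < 0" "(1::rat) \<le> of_nat i"
    "\<lfloor>(of_nat i::rat)\<rfloor> = int i" "nat \<lfloor>(of_nat i::rat)\<rfloor> = i"
    "(of_nat i::rat) - 1/2 \<notin> \<int>" "(0::rat) < of_nat i" "2 * (of_nat i::rat) \<in> \<int>"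
    "(-1::complex) powi \<lfloor>2 * (of_nat i::rat)\<rfloor> = 1" "delta (of_nat i) = 1"
    "of_rat (of_nat i) = (of_nat i::complex)"
proof -
  show "(of_nat i::rat) - 1/2 \<notin> \<int>"
  proof
    assume "(of_nat i::rat) - 1/2 \<in> \<int>"
    then obtain z where "(of_nat i::rat) - 1/2 = of_int z" by (auto elim: Ints_cases)
    then have "(of_int (2*int i)::rat) = of_int (2*z+1)" by (simp add: field_simps)
    then have "2*int i = 2*z+1" by (simp only: of_int_eq_iff)
    then show False by presburger
  qed
  have "2 * (of_nat i::rat) = of_int (int (2*i))" by simp
  then have "\<lfloor>2 * (of_nat i::rat)\<rfloor> = int (2*i)" by (simp only: floor_of_int)
  then show "(-1::complex) powi \<lfloor>2 * (of_nat i::rat)\<rfloor> = 1"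
    by (simp add: power_int_of_nat)
  show "(of_nat i::rat) \<in> \<int>" by simp
  show "\<not> (of_nat i::rat) < 0" by simp
  show "(1::rat) \<le> of_nat i" using assms by simp
  show "\<lfloor>(of_nat i::rat)\<rfloor> = int i" by simp
  show "nat \<lfloor>(of_nat i::rat)\<rfloor> = i" by simp
  show "(0::rat) < of_nat i" using assms by simp
  show "2 * (of_nat i::rat) \<in> \<int>" by simp
  show "delta (of_nat i) = 1" using assms by (simp add: delta_def)
  show "of_rat (of_nat i) = (of_nat i::complex)" by simp
qed

lemma half_facts:
  fixes k :: nat assumes "1 \<le> k"
  shows "\<not> (of_nat k - 1/2::rat) < 0" "(of_nat k - 1/2::rat) \<notin> \<int>"
    "(of_nat k - 1/2::rat) - 1/2 \<in> \<int>" "(0::rat) < of_nat k - 1/2"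
    "\<lfloor>(of_nat k - 1/2::rat) + 1/2\<rfloor> = int k" "nat \<lfloor>(of_nat k - 1/2::rat) + 1/2\<rfloor> = k"
    "2 * (of_nat k - 1/2::rat) \<in> \<int>"
    "(-1::complex) powi \<lfloor>2 * (of_nat k - 1/2::rat)\<rfloor> = -1" "delta (of_nat k - 1/2) = 1"
    "of_rat (of_nat k - 1/2) = (of_nat k - 1/2::complex)"
proof -
  show "(of_nat k - 1/2::rat) \<notin> \<int>"
  proof
    assume "(of_nat k - 1/2::rat) \<in> \<int>"
    then obtain z where "(of_nat k::rat) - 1/2 = of_int z" by (auto elim: Ints_cases)
    then have "(of_int (2*int k)::rat) = of_int (2*z+1)" by (simp add: field_simps)
    then have "2*int k = 2*z+1" by (simp only: of_int_eq_iff)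
    then show False by presburger
  qed
  have "(of_nat k - 1/2::rat) - 1/2 = of_int (int k - 1)" by simp
  then show "(of_nat k - 1/2::rat) - 1/2 \<in> \<int>" by (simp only: Ints_of_int)
  have "2 * (of_nat k - 1/2::rat) = of_int (int k + int k - 1)" by (simp add: field_simps)
  then show "2 * (of_nat k - 1/2::rat) \<in> \<int>" by (simp only: Ints_of_int)
  have "2 * (of_nat k - 1/2::rat) = of_int (2 * int (k - 1) + 1)"
    using assms by (simp add: of_nat_diff field_simps)
  then have f: "\<lfloor>2 * (of_nat k - 1/2::rat)\<rfloor> = 2 * int (k - 1) + 1"
    by (simp only: floor_of_int)
  show "(-1::complex) powi \<lfloor>2 * (of_nat k - 1/2::rat)\<rfloor> = -1"
  proof -
    have "2 * int (k - 1) + 1 = int (2*(k-1)+1)" by simp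
    then have "(-1::complex) powi (2 * int (k - 1) + 1) = (-1) ^ (2*(k-1)+1)"
      by (simp only: power_int_of_nat)
    then show ?thesis unfolding f by simp
  qed
  show "of_rat (of_nat k - 1/2) = (of_nat k - 1/2::complex)" by (simp add: of_rat_diff of_rat_divide)
  show "\<not> (of_nat k - 1/2::rat) < 0" using assms by simp
  show "(0::rat) < of_nat k - 1/2" using assms by simp
  have "(of_nat k - 1/2::rat) + 1/2 = of_int (int k)" by simp
  then show "\<lfloor>(of_nat k - 1/2::rat) + 1/2\<rfloor> = int k" by (simp only: floor_of_int)
  then show "nat \<lfloor>(of_nat k - 1/2::rat) + 1/2\<rfloor> = k" by simp
  show "delta (of_nat k - 1/2) = 1" using assms by (simp add: delta_def)
qed

lemma of_int_max_nat: "(of_int (max (int a - int b) 0) :: complex) = of_nat (a - b)"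
  by (cases "b \<le> a") (auto simp: of_nat_diff max_def)

lemma of_int_max_nat2: "(of_int (max (int a - int b + 1) 0) :: complex) = of_nat (a + 1 - b)"
  using of_int_max_nat[of "a+1" b] by (simp add: algebra_simps)

lemma int_struct: "(j::rat) \<in> \<int> \<Longrightarrow> j \<ge> 1 \<Longrightarrow> \<exists>i\<ge>1. j = of_nat i"
proof -
  assume "j \<in> \<int>" "j \<ge> 1"
  then obtain z where z: "j = of_int z" by (auto elim: Ints_cases)
  then have "z \<ge> 1" using \<open>j \<ge> 1\<close> by simp
  then have "j = of_nat (nat z)" using z by simp
  then show ?thesis using \<open>z \<ge> 1\<close> by (intro exI[of _ "nat z"]) auto
qed

lemma half_struct: "(j::rat) - 1/2 \<in> \<int> \<Longrightarrow> j > 0 \<Longrightarrow> \<exists>k\<ge>1. j = of_nat k - 1/2"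
proof -
  assume "j - 1/2 \<in> \<int>" "j > 0"
  then obtain z where z: "j - 1/2 = of_int z" by (auto elim: Ints_cases)
  then have "(of_int z::rat) > -1/2" using \<open>j > 0\<close> by simp
  then have "z \<ge> 0" by linarith
  then have "j = of_nat (nat (z+1)) - 1/2" using z by (simp add: algebra_simps)
  then show ?thesis using \<open>z \<ge> 0\<close> by (intro exI[of _ "nat (z+1)"]) auto
qed

lemma neg_struct: "neg_coef m l j \<noteq> 0 \<Longrightarrow> j \<in> (\<lambda>i::int. (of_int i::rat)) ` {-int m..-1}"
proof -
  assume "neg_coef m l j \<noteq> 0"
  then have h: "j \<in> \<int>" "- of_nat m \<le> j" "j \<le> -1" unfolding neg_coef_def by (auto split: if_splits)
  then obtain z where z: "j = of_int z" by (auto elim: Ints_cases)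
  then have "z \<in> {-int m..-1}" using h by simp
  then show ?thesis using z by blast
qed

lemma conj_nz: "conj_part nu k \<noteq> 0 \<Longrightarrow> (\<And>i. 1 \<le> i \<Longrightarrow> nu i \<le> N) \<Longrightarrow> k \<le> N"
  unfolding conj_part_def
  by (metis (mono_tags, lifting) card.empty empty_Collect_eq order_trans)

lemma vals_int:
  assumes "1 \<le> i"
  shows "snd (lam m l nu d) (of_nat i) = of_nat (nu i)"
    "snd (lam_bar m l nu d) (of_nat i) = 0"
    "snd (lam_tilde m l nu d) (of_nat i) = of_nat (nu i - i)"
    "rho r (of_nat i) = r + 1 - of_nat i"
    "rho_tilde r (of_nat i) = r + 1"
  using int_facts[OF assms]
  by (simp_all add: lam_def lam_bar_def lam_tilde_def rho_def rho_tilde_def of_int_max_nat)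

lemma vals_half:
  assumes "1 \<le> k"
  shows "snd (lam m l nu d) (of_nat k - 1/2) = 0"
    "snd (lam_bar m l nu d) (of_nat k - 1/2) = of_nat (conj_part nu k)"
    "snd (lam_tilde m l nu d) (of_nat k - 1/2) = of_nat (conj_part nu k + 1 - k)"
    "rho_bar r (of_nat k - 1/2) = r + of_nat k"
    "rho_tilde r (of_nat k - 1/2) = r + 1"
  using half_facts[OF assms]
  by (simp_all add: lam_def lam_bar_def lam_tilde_def rho_bar_def rho_tilde_def of_int_max_nat2)

lemma vals_neg:
  assumes "(j::rat) < 0"
  shows "snd (lam m l nu d) j = neg_coef m l j"
    "snd (lam_bar m l nu d) j = neg_coef m l j"
    "snd (lam_tilde m l nu d) j = neg_coef m l j"
    "rho_bar r j = rho r j" "rho_tilde r j = rho r j" "delta j = 0"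
  using assms by (simp_all add: lam_def lam_bar_def lam_tilde_def rho_def rho_bar_def rho_tilde_def delta_def)

definition Sneg :: "nat \<Rightarrow> rat set" where "Sneg m = (\<lambda>i::int. (of_int i::rat)) ` {-int m..-1}"
definition Sint :: "nat \<Rightarrow> rat set" where "Sint N = (\<lambda>i::nat. (of_nat i::rat)) ` {1..N}"
definition Shalf :: "nat \<Rightarrow> rat set" where "Shalf N = (\<lambda>k::nat. (of_nat k::rat) - 1/2) ` {1..N}"

lemma split3:
  assumes "supp f \<subseteq> Sneg m \<union> Sint N \<union> Shalf N"
  shows "form_rho (c,f) \<rho> = (\<Sum>j\<in>Sneg m. TT c f \<rho> j) + (\<Sum>i\<in>{1..N}. TT c f \<rho> (of_nat i))
     + (\<Sum>k\<in>{1..N}. TT c f \<rho> (of_nat k - 1/2))"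
proof -
  have fin: "finite (Sneg m)" "finite (Sint N)" "finite (Shalf N)"
    unfolding Sneg_def Sint_def Shalf_def by auto
  have d1: "Sneg m \<inter> (Sint N \<union> Shalf N) = {}"
    unfolding Sneg_def Sint_def Shalf_def by auto
  have d2: "Sint N \<inter> Shalf N = {}"
  proof -
    { fix i k :: nat assume "1 \<le> i" "(of_nat i::rat) = of_nat k - 1/2"
      then have "of_nat i - 1/2 \<in> (\<int>::rat set)" by simp
      then have False using int_facts(6)[OF \<open>1 \<le> i\<close>] by simp }
    then show ?thesis unfolding Sint_def Shalf_def by auto
  qed
  have "form_rho (c,f) \<rho> = (\<Sum>j\<in>Sneg m \<union> (Sint N \<union> Shalf N). TT c f \<rho> j)"
    by (rule form_rho_split) (use fin assms in auto)
  also have "\<dots> = (\<Sum>j\<in>Sneg m. TT c f \<rho> j) + (\<Sum>j\<in>Sint N. TT c f \<rho> j) + (\<Sum>j\<in>Shalf N. TT c f \<rho> j)"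
    using fin d1 d2 by (simp add: sum.union_disjoint)
  also have "(\<Sum>j\<in>Sint N. TT c f \<rho> j) = (\<Sum>i\<in>{1..N}. TT c f \<rho> (of_nat i))"
    unfolding Sint_def by (subst sum.reindex) (auto simp: inj_on_def)
  also have "(\<Sum>j\<in>Shalf N. TT c f \<rho> j) = (\<Sum>k\<in>{1..N}. TT c f \<rho> (of_nat k - 1/2))"
    unfolding Shalf_def by (subst sum.reindex) (auto simp: inj_on_def)
  finally show ?thesis .
qed

lemma supp_all:
  assumes hN1: "\<And>i. i > N \<Longrightarrow> nu i = 0" and hN2: "\<And>i. 1 \<le> i \<Longrightarrow> nu i \<le> N"
  and f: "f \<in> {snd (lam m l nu d), snd (lam_bar m l nu d), snd (lam_tilde m l nu d)}"
  shows "supp f \<subseteq> Sneg m \<union> Sint N \<union> Shalf N"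
proof
  fix j assume "j \<in> supp f"
  then have nz: "f j \<noteq> 0" by (simp add: supp_def)
  consider "j < 0" | "j \<in> \<int> \<and> j \<ge> 1" | "j - 1/2 \<in> \<int> \<and> j > 0" | "\<not> j < 0" "\<not> (j \<in> \<int> \<and> j \<ge> 1)" "\<not> (j - 1/2 \<in> \<int> \<and> j > 0)"
    by blast
  then show "j \<in> Sneg m \<union> Sint N \<union> Shalf N"
  proof cases
    case 1
    then have "f j = neg_coef m l j" using f vals_neg[OF 1] by auto
    then show ?thesis using neg_struct[of m l j] nz unfolding Sneg_def by auto
  next
    case 2
    then obtain i where i: "i \<ge> 1" "j = of_nat i" using int_struct by blast
    have "i \<le> N"
    proof (rule ccontr)
      assume "\<not> i \<le> N"
      then have "nu i = 0" using hN1 by simp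
      then have "f j = 0" using f vals_int[OF i(1)] i(2) by auto
      then show False using nz by simp
    qed
    then show ?thesis using i unfolding Sint_def by auto
  next
    case 3
    then obtain k where k: "k \<ge> 1" "j = of_nat k - 1/2" using half_struct by blast
    have "k \<le> N"
    proof (rule ccontr)
      assume "\<not> k \<le> N"
      then have "conj_part nu k = 0" using conj_nz hN2 by blast
      then have "f j = 0" using f vals_half[OF k(1)] k(2) \<open>\<not> k \<le> N\<close> by auto
      then show False using nz by simp
    qed
    then show ?thesis using k unfolding Shalf_def by auto
  next
    case 4
    then have "f j = 0" using f by (auto simp: lam_def lam_bar_def lam_tilde_def)
    then show ?thesis using nz by simp
  qed
qed

theorem proposition3p3:
  fixes x :: lie_type and m :: nat and l :: "int \<Rightarrow> complex"
    and nu :: "nat \<Rightarrow> nat" and d :: complex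
  assumes "is_partition nu"
    and "x = TBbullet \<Longrightarrow> (\<forall>i. - int m \<le> i \<and> i \<le> -1 \<longrightarrow> l i \<in> \<int>)"
  shows "form_rho (lam_tilde m l nu d) (rho_tilde (rr x m)) = form_rho (lam m l nu d) (rho (rr x m))
       \<and> form_rho (lam m l nu d) (rho (rr x m)) = form_rho (lam_bar m l nu d) (rho_bar (rr x m))"
proof -
  note part = assms(1)
  define r where "r = rr x m"
  obtain N0 where N0: "\<And>i. i \<in> {i. i \<ge> 1 \<and> nu i \<noteq> 0} \<Longrightarrow> i \<le> N0"
    using part unfolding is_partition_def by (meson finite_nat_set_iff_bounded_le)
  define N where "N = N0 + nu 1"
  have hN1: "\<And>i. i > N \<Longrightarrow> nu i = 0"
  proof -
    fix i assume "i > N"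
    then show "nu i = 0" using N0[of i] unfolding N_def by (cases "i \<ge> 1") auto
  qed
  have hN2: "\<And>i. 1 \<le> i \<Longrightarrow> nu i \<le> N"
    using part_anti'[OF part, of 1] unfolding N_def by fastforce
  define fL where "fL = snd (lam m l nu d)"
  define fB where "fB = snd (lam_bar m l nu d)"
  define fT where "fT = snd (lam_tilde m l nu d)"
  have lamL: "lam m l nu d = (d, fL)" unfolding fL_def lam_def by simp
  have lamB: "lam_bar m l nu d = (d, fB)" unfolding fB_def lam_bar_def by simp
  have lamT: "lam_tilde m l nu d = (d, fT)" unfolding fT_def lam_tilde_def by simp
  have sL: "supp fL \<subseteq> Sneg m \<union> Sint N \<union> Shalf N" unfolding fL_def by (rule supp_all[where N=N and nu=nu]) (use hN1 hN2 in auto)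
  have sB: "supp fB \<subseteq> Sneg m \<union> Sint N \<union> Shalf N" unfolding fB_def by (rule supp_all[where N=N and nu=nu]) (use hN1 hN2 in auto)
  have sT: "supp fT \<subseteq> Sneg m \<union> Sint N \<union> Shalf N" unfolding fT_def by (rule supp_all[where N=N and nu=nu]) (use hN1 hN2 in auto)
  define hL where "hL = (\<lambda>i j::nat. 2 * of_nat j - 1 + (-2*d + 2*(r + 1 - of_nat i)) :: complex)"
  define Box where "Box = (\<Sum>i\<in>{1..N}. \<Sum>j\<in>{1..nu i}. hL i j)"
  define K where "K = -2*d + 2*(r+1)"
  have negB: "(\<Sum>j\<in>Sneg m. TT d fB (rho_bar r) j) = (\<Sum>j\<in>Sneg m. TT d fL (rho r) j)"
    by (rule sum.cong[OF refl]) (auto simp: Sneg_def TT_def fL_def fB_def vals_neg)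
  have negT: "(\<Sum>j\<in>Sneg m. TT d fT (rho_tilde r) j) = (\<Sum>j\<in>Sneg m. TT d fL (rho r) j)"
    by (rule sum.cong[OF refl]) (auto simp: Sneg_def TT_def fL_def fT_def vals_neg)
  have L1: "(\<Sum>i\<in>{1..N}. TT d fL (rho r) (of_nat i)) = Box"
    unfolding Box_def
  proof (rule sum.cong[OF refl])
    fix i assume "i \<in> {1..N}"
    then have i: "1 \<le> i" by simp
    show "TT d fL (rho r) (of_nat i) = (\<Sum>j\<in>{1..nu i}. hL i j)"
      unfolding hL_def R1 TT_def fL_def  int_facts(9,10)[OF i] vals_int[OF i]
      by (simp add: algebra_simps)
  qed
  have L2: "(\<Sum>k\<in>{1..N}. TT d fL (rho r) (of_nat k - 1/2)) = 0"
    by (rule sum.neutral) (auto simp: TT_def fL_def vals_half)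
  have B1: "(\<Sum>i\<in>{1..N}. TT d fB (rho_bar r) (of_nat i)) = 0"
    by (rule sum.neutral) (auto simp: TT_def fB_def vals_int)
  have B2: "(\<Sum>k\<in>{1..N}. TT d fB (rho_bar r) (of_nat k - 1/2))
      = (\<Sum>k\<in>{1..N}. \<Sum>i\<in>{1..conj_part nu k}. - (2 * of_nat i - 1) + (-2*d + 2*(r + of_nat k)))"
  proof (rule sum.cong[OF refl])
    fix k assume "k \<in> {1..N}"
    then have k: "1 \<le> k" by simp
    show "TT d fB (rho_bar r) (of_nat k - 1/2) = (\<Sum>i\<in>{1..conj_part nu k}. - (2 * of_nat i - 1) + (-2*d + 2*(r + of_nat k)))"
      unfolding R1' TT_def fB_def  half_facts(8,9)[OF k] vals_half[OF k]
      by (simp add: algebra_simps)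
  qed
  also have "\<dots> = (\<Sum>i\<in>{1..N}. \<Sum>j\<in>{1..nu i}. - (2 * of_nat i - 1) + (-2*d + 2*(r + of_nat j)))"
    by (rule swap_boxes[OF part hN1 hN2])
  also have "\<dots> = Box" unfolding Box_def hL_def
    by (intro sum.cong refl) (simp add: algebra_simps)
  finally have B2': "(\<Sum>k\<in>{1..N}. TT d fB (rho_bar r) (of_nat k - 1/2)) = Box" .
  have T1: "(\<Sum>i\<in>{1..N}. TT d fT (rho_tilde r) (of_nat i))
     = (\<Sum>i\<in>{1..N}. \<Sum>j\<in>{1..nu i}. if i < j then 2 * (of_nat j - of_nat i) - 1 + K else 0)"
  proof (rule sum.cong[OF refl])
    fix i assume "i \<in> {1..N}"
    then have i: "1 \<le> i" by simp
    show "TT d fT (rho_tilde r) (of_nat i) = (\<Sum>j\<in>{1..nu i}. if i < j then 2 * (of_nat j - of_nat i) - 1 + K else 0)"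
      unfolding R2 TT_def fT_def K_def  int_facts(9,10)[OF i] vals_int[OF i]
      by (simp add: algebra_simps)
  qed
  have T2: "(\<Sum>k\<in>{1..N}. TT d fT (rho_tilde r) (of_nat k - 1/2))
      = (\<Sum>k\<in>{1..N}. \<Sum>i\<in>{1..conj_part nu k}. if k \<le> i then - (2 * (of_nat i - of_nat k) + 1) + K else 0)"
  proof (rule sum.cong[OF refl])
    fix k assume "k \<in> {1..N}"
    then have k: "1 \<le> k" by simp
    show "TT d fT (rho_tilde r) (of_nat k - 1/2) = (\<Sum>i\<in>{1..conj_part nu k}. if k \<le> i then - (2 * (of_nat i - of_nat k) + 1) + K else 0)"
      unfolding R3[OF k] TT_def fT_def K_def  half_facts(8,9)[OF k] vals_half[OF k]
      by (simp add: algebra_simps)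
  qed
  also have "\<dots> = (\<Sum>i\<in>{1..N}. \<Sum>j\<in>{1..nu i}. if j \<le> i then - (2 * (of_nat i - of_nat j) + 1) + K else 0)"
    by (rule swap_boxes[OF part hN1 hN2])
  finally have T2': "(\<Sum>k\<in>{1..N}. TT d fT (rho_tilde r) (of_nat k - 1/2)) = \<dots>" .
  have T12: "(\<Sum>i\<in>{1..N}. TT d fT (rho_tilde r) (of_nat i)) + (\<Sum>k\<in>{1..N}. TT d fT (rho_tilde r) (of_nat k - 1/2)) = Box"
    unfolding T1 T2' Box_def sum.distrib[symmetric]
    by (intro sum.cong refl) (auto simp: hL_def K_def algebra_simps)
  have EL: "form_rho (lam m l nu d) (rho r) = (\<Sum>j\<in>Sneg m. TT d fL (rho r) j) + Box"
    unfolding lamL split3[OF sL] L1 L2 by simp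
  have EB: "form_rho (lam_bar m l nu d) (rho_bar r) = (\<Sum>j\<in>Sneg m. TT d fL (rho r) j) + Box"
    unfolding lamB split3[OF sB] B1 B2' negB by simp
  have ET: "form_rho (lam_tilde m l nu d) (rho_tilde r) = (\<Sum>j\<in>Sneg m. TT d fL (rho r) j) + Box"
    unfolding lamT split3[OF sT] negT using T12 by (simp add: algebra_simps)
  show ?thesis using EL EB ET unfolding r_def by simp
qed

end
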